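(* For every integer $m\ge2$ and all nonnegative integers $k_1,\dots,k_{m-1}$, $d^{(m)}_{k_1,\dots,k_{m-1}}$ is a positive integer divisible by $m$.
   Context: For $1\le j\le m$ and integers $k_1,\dots,k_{m-1}\ge0$, $e^{(m),j}_{k_1,\dots,k_{m-1}}=\prod_{1\le i\le m,\,i\ne j}(i-j)^{k_{(i-j)\bmod m}}$, where $(i-j)\bmod m$ denotes the representative in $\{1,\dots,m-1\}$. Then $d^{(m)}_{k_1,\dots,k_{m-1}}=2\sum_{j=1}^{p}e^{(m),j}_{k_1,\dots,k_{m-1}}$ if $m=2p$, and $d^{(m)}_{k_1,\dots,k_{m-1}}=e^{(m),p+1}_{k_1,\dots,k_{m-1}}+2\sum_{j=1}^{p}e^{(m),j}_{k_1,\dots,k_{m-1}}$ if $m=2p+1$. *)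

theory Defs
  imports Main
begin

text \<open>The exponent sequence k_1,...,k_{m-1} is given as a function k :: nat => nat;
only the values k 1, ..., k (m-1) are used.\<close>

definition e_coef :: "nat \<Rightarrow> (nat \<Rightarrow> nat) \<Rightarrow> nat \<Rightarrow> int" where
  "e_coef m k j = (\<Prod>i\<in>{1..m} - {j}.
      (int i - int j) ^ (k (nat ((int i - int j) mod int m))))"

definition d_coef :: "nat \<Rightarrow> (nat \<Rightarrow> nat) \<Rightarrow> int" where
  "d_coef m k =
     (if even m then 2 * (\<Sum>j=1..m div 2. e_coef m k j)
      else e_coef m k (m div 2 + 1) + 2 * (\<Sum>j=1..m div 2. e_coef m k j))"

end

theory Submission imports Defs Complex_Main begin

definition vv :: "nat \<Rightarrow> nat \<Rightarrow> nat \<Rightarrow> int" where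
  "vv m j l = (if l \<le> m - j then int l else int l - int m)"

lemma bij_g:
  fixes j m :: nat
  assumes "1 \<le> j" "j \<le> m"
  shows "bij_betw (\<lambda>l. if l \<le> m - j then l + j else l + j - m) {1..m-1} ({1..m} - {j})"
proof (rule bij_betw_imageI)
  show "inj_on (\<lambda>l. if l \<le> m - j then l + j else l + j - m) {1..m-1}"
  proof (rule inj_onI)
    fix x y assume "x \<in> {1..m-1}" "y \<in> {1..m-1}"
      "(if x \<le> m - j then x + j else x + j - m) = (if y \<le> m - j then y + j else y + j - m)"
    then show "x = y" using assms by - (cases "x \<le> m - j"; cases "y \<le> m - j"; simp only: if_True if_False atLeastAtMost_iff; arith)
  qed
  show "(\<lambda>l. if l \<le> m - j then l + j else l + j - m) ` {1..m-1} = {1..m} - {j}"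
  proof
    show "(\<lambda>l. if l \<le> m - j then l + j else l + j - m) ` {1..m-1} \<subseteq> {1..m} - {j}"
      using assms by auto
    show "{1..m} - {j} \<subseteq> (\<lambda>l. if l \<le> m - j then l + j else l + j - m) ` {1..m-1}"
    proof
      fix i assume i: "i \<in> {1..m} - {j}"
      show "i \<in> (\<lambda>l. if l \<le> m - j then l + j else l + j - m) ` {1..m-1}"
      proof (cases "j < i")
        case True
        then show ?thesis using i assms by (intro image_eqI[where x="i - j"]) auto
      next
        case False
        then show ?thesis using i assms by (intro image_eqI[where x="i + m - j"]) auto
      qed
    qed
  qed
qed

lemma e_reindex:
  assumes "1 \<le> j" "j \<le> m"
  shows "e_coef m k j = (\<Prod>l\<in>{1..m-1}. vv m j l ^ k l)"
proof -
  let ?g = "\<lambda>l. if l \<le> m - j then l + j else l + j - m"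
  have "e_coef m k j = (\<Prod>l\<in>{1..m-1}. (int (?g l) - int j) ^ (k (nat ((int (?g l) - int j) mod int m))))"
    unfolding e_coef_def using prod.reindex_bij_betw[OF bij_g[OF assms], symmetric] by simp
  also have "\<dots> = (\<Prod>l\<in>{1..m-1}. vv m j l ^ k l)"
  proof (rule prod.cong)
    fix l assume l: "l \<in> {1..m-1}"
    have a: "int (?g l) - int j = vv m j l" using l assms by (auto simp: vv_def)
    have b: "vv m j l mod int m = int l"
    proof (cases "l \<le> m - j")
      case True
      have "int l < int m" using l by auto
      then show ?thesis using True by (simp add: vv_def mod_pos_pos_trivial)
    next
      case False
      have "int l < int m" using l by auto
      then have "vv m j l mod int m = int l mod int m" using False by (simp add: vv_def mod_diff_right_eq[symmetric])
      then show ?thesis using \<open>int l < int m\<close> by (simp add: mod_pos_pos_trivial)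
    qed
    show "(int (?g l) - int j) ^ (k (nat ((int (?g l) - int j) mod int m))) = vv m j l ^ k l"
      using a b by simp
  qed simp
  finally show ?thesis .
qed

lemma vv_nonzero:
  assumes "l \<in> {1..m-1}"
  shows "vv m j l \<noteq> 0"
  using assms by (auto simp: vv_def)

lemma e_nonzero:
  assumes "1 \<le> j" "j \<le> m"
  shows "e_coef m k j \<noteq> 0"
  unfolding e_reindex[OF assms] using vv_nonzero by (simp add: prod_zero_iff)

lemma e_one_pos:
  assumes "1 \<le> m"
  shows "e_coef m k 1 > 0"
proof -
  have "e_coef m k 1 = (\<Prod>l\<in>{1..m-1}. vv m 1 l ^ k l)" using e_reindex[of 1 m] assms by simp
  also have "\<dots> > 0"
    by (rule prod_pos) (auto simp: vv_def)
  finally show ?thesis .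
qed

lemma e_step:
  assumes "1 \<le> j" "j < m"
  shows "e_coef m k (Suc j) * int (m - j) ^ k (m - j) = e_coef m k j * (- int j) ^ k (m - j)"
proof -
  let ?L = "m - j"
  have L: "?L \<in> {1..m-1}" using assms by auto
  have fin: "finite {1..m-1}" by simp
  have rest: "(\<Prod>l\<in>{1..m-1} - {?L}. vv m (Suc j) l ^ k l) = (\<Prod>l\<in>{1..m-1} - {?L}. vv m j l ^ k l)"
  proof (rule prod.cong)
    fix l assume "l \<in> {1..m-1} - {?L}"
    then have "(l \<le> m - Suc j) = (l \<le> m - j)" by auto
    then show "vv m (Suc j) l ^ k l = vv m j l ^ k l" by (simp add: vv_def)
  qed simp
  have a: "e_coef m k (Suc j) = vv m (Suc j) ?L ^ k ?L * (\<Prod>l\<in>{1..m-1} - {?L}. vv m (Suc j) l ^ k l)"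
    using e_reindex[of "Suc j" m k] assms prod.remove[OF fin L] by simp
  have b: "e_coef m k j = vv m j ?L ^ k ?L * (\<Prod>l\<in>{1..m-1} - {?L}. vv m j l ^ k l)"
    using e_reindex[of j m k] assms prod.remove[OF fin L] by simp
  have c1: "vv m (Suc j) ?L = - int j" using assms by (simp add: vv_def)
  have c2: "vv m j ?L = int (m - j)" by (simp add: vv_def)
  show ?thesis unfolding a b c1 c2 rest by (simp add: algebra_simps)
qed

lemma e_cong:
  assumes "1 \<le> j" "j \<le> m"
  shows "e_coef m k j mod int m = (\<Prod>l\<in>{1..m-1}. int l ^ k l) mod int m"
proof -
  have "e_coef m k j mod int m = (\<Prod>l\<in>{1..m-1}. vv m j l ^ k l mod int m) mod int m"
    unfolding e_reindex[OF assms] by (simp add: mod_prod_eq)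
  also have "\<dots> = (\<Prod>l\<in>{1..m-1}. int l ^ k l mod int m) mod int m"
  proof (rule arg_cong[where f="\<lambda>x. x mod int m"], rule prod.cong)
    fix l assume l: "l \<in> {1..m-1}"
    have "vv m j l mod int m = int l mod int m"
    proof (cases "l \<le> m - j")
      case True then show ?thesis by (simp add: vv_def)
    next
      case False
      then show ?thesis by (simp add: vv_def mod_diff_right_eq[symmetric])
    qed
    then show "vv m j l ^ k l mod int m = int l ^ k l mod int m"
      by (metis power_mod)
  qed simp
  also have "\<dots> = (\<Prod>l\<in>{1..m-1}. int l ^ k l) mod int m" by (simp add: mod_prod_eq)
  finally show ?thesis .
qed

lemma step_ineq:
  fixes r T c j M :: real
  assumes "-c \<le> r" "r \<le> 1" "0 < c" "c*M = j" "c*j \<le> M" "-j < T" "T < M" "0<j"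
  shows "-j < r*T \<and> r*T < M"
proof -
  have "0 < c*M" using assms by simp
  then have M0: "0 < M" using assms(3) zero_less_mult_pos by blast
  show ?thesis
  proof (cases "0 \<le> r")
    case True
    show ?thesis
    proof (cases "0 \<le> T")
      case True
      have "r*T \<le> 1*T" using \<open>0 \<le> r\<close> assms(2) True by (intro mult_right_mono) auto
      moreover have "0 \<le> r*T" using \<open>0 \<le> r\<close> True by simp
      ultimately show ?thesis using assms by linarith
    next
      case False
      have "1*T \<le> r*T" using assms(2) False by (intro mult_right_mono_neg) auto
      moreover have "r*T \<le> 0" using \<open>0 \<le> r\<close> False by (simp add: mult_nonneg_nonpos)
      ultimately show ?thesis using assms M0 by linarith
    qed
  next
    case False
    show ?thesis
    proof (cases "0 \<le> T")
      case True
      have "(-c)*T \<le> r*T" using assms(1) True by (intro mult_right_mono) auto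
      moreover have "c*T < c*M" using assms(3,7) by simp
      moreover have "r*T \<le> 0" using False True by (simp add: mult_nonpos_nonneg)
      ultimately show ?thesis using assms M0 by linarith
    next
      case F2: False
      have "(-r)*(-T) \<le> c*(-T)" using assms(1) F2 by (intro mult_right_mono) auto
      moreover have "c*(-T) < c*j" using assms(3,6) by (intro mult_strict_left_mono) auto
      moreover have "0 \<le> (-r)*(-T)" using False F2 by (intro mult_nonneg_nonneg) auto
      ultimately show ?thesis using assms M0 by simp
    qed
  qed
qed

lemma key:
  fixes x :: "nat \<Rightarrow> real" and p m :: nat and oo :: real
  assumes p1: "1 \<le> p" and pm: "2*p \<le> m" and nz: "\<forall>j. 1 \<le> j \<and> j \<le> p+1 \<longrightarrow> x j \<noteq> 0"
    and rat: "\<forall>j. 1 \<le> j \<and> j \<le> p \<longrightarrow> -(real j/(real m - real j)) \<le> x (Suc j)/x j \<and> x (Suc j)/x j \<le> 1"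
    and b1: "-(real p) < oo/(2*x(p+1))" and b2: "oo/(2*x(p+1)) < real m - real p"
    and i: "i \<le> p+1"
  shows "1 \<le> i \<longrightarrow> -(real i - 1) < (2*(\<Sum>t=i..p. x t) + oo)/(2*x i) \<and> (2*(\<Sum>t=i..p. x t) + oo)/(2*x i) < real m - real i + 1"
  using i
proof (induction rule: inc_induct)
  case base
  then show ?case using b1 b2 by simp
next
  case (step n)
  show ?case
  proof
    assume n1: "1 \<le> n"
    have np: "n \<le> p" using step.hyps by simp
    define S where "S = (\<Sum>t=Suc n..p. x t)"
    define T where "T = (2*S + oo)/(2*x (Suc n))"
    define r where "r = x (Suc n)/x n"
    define c where "c = real n/(real m - real n)"
    have xn: "x n \<noteq> 0" using nz n1 np by simp
    have xs: "x (Suc n) \<noteq> 0" using nz n1 np by simp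
    have IH: "-(real n) < T \<and> T < real m - real n"
      using step.IH unfolding T_def S_def by simp
    have mn: "real n \<le> real m - real n" using pm np n1 by simp
    have mn0: "0 < real m - real n" using pm np n1 by simp
    have sum: "(\<Sum>t=n..p. x t) = x n + S" unfolding S_def using np by (simp add: sum.atLeast_Suc_atMost)
    have eq: "(2*(\<Sum>t=n..p. x t) + oo)/(2*x n) = 1 + r*T"
      unfolding sum T_def r_def using xn xs by (simp add: field_simps)
    have rr: "-c \<le> r \<and> r \<le> 1" using rat n1 np unfolding r_def c_def by simp
    have c0: "0 < c" unfolding c_def using n1 mn0 by simp
    have cM: "c*(real m - real n) = real n" unfolding c_def using mn0 by simp
    have cj: "c*real n \<le> real m - real n"
    proof -
      have "c \<le> 1" unfolding c_def using mn mn0 by (simp add: divide_le_eq_1)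
      then have "c*real n \<le> 1*real n" by (intro mult_right_mono) auto
      then show ?thesis using mn by simp
    qed
    have "-real n < r*T \<and> r*T < real m - real n"
      using step_ineq[of c r "real m - real n" "real n" T] rr c0 cM cj IH n1 by simp
    then show "-(real n - 1) < (2*(\<Sum>t=n..p. x t) + oo)/(2*x n) \<and> (2*(\<Sum>t=n..p. x t) + oo)/(2*x n) < real m - real n + 1"
      unfolding eq by simp
  qed
qed

lemma ratio_bounds:
  fixes c :: real
  assumes "0 \<le> c" "c \<le> 1"
  shows "-c \<le> (-c)^K \<and> (-c)^K \<le> 1"
proof (cases K)
  case 0 then show ?thesis using assms by simp
next
  case (Suc K')
  have "c^K \<le> c^1" using assms Suc by (intro power_decreasing) auto
  moreover have "\<bar>(-c)^K\<bar> = c^K" using assms by (simp add: power_abs)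
  moreover have "(-c)^K \<le> \<bar>(-c)^K\<bar>" by (rule abs_ge_self)
  moreover have "-\<bar>(-c)^K\<bar> \<le> (-c)^K" using abs_ge_minus_self[of "(-c)^K"] by linarith
  ultimately show ?thesis using assms by simp
qed

lemma d_pos:
  assumes "m \<ge> 2"
  shows "d_coef m k > 0"
proof -
  define p where "p = m div 2"
  define x where "x j = real_of_int (e_coef m k j)" for j
  define oo where "oo = (if even m then 0 else x (p+1))"
  have p1: "1 \<le> p" using assms unfolding p_def by simp
  have pm: "2*p \<le> m" unfolding p_def by simp
  have pm2: "m \<le> 2*p+1" unfolding p_def by simp
  have nz: "\<forall>j. 1 \<le> j \<and> j \<le> p+1 \<longrightarrow> x j \<noteq> 0"
  proof (intro allI impI)
    fix j assume "1 \<le> j \<and> j \<le> p+1"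
    moreover have "p + 1 \<le> m" using assms pm by linarith
    ultimately show "x j \<noteq> 0" unfolding x_def using e_nonzero[of j m k] by simp
  qed
  have rat: "\<forall>j. 1 \<le> j \<and> j \<le> p \<longrightarrow> -(real j/(real m - real j)) \<le> x (Suc j)/x j \<and> x (Suc j)/x j \<le> 1"
  proof (intro allI impI)
    fix j assume j: "1 \<le> j \<and> j \<le> p"
    let ?K = "k (m - j)"
    have jm: "j < m" using j pm p1 by linarith
    have mj: "real n \<le> real m - real j" if "n = j" for n using that j pm by simp
    have mj0: "0 < real m - real j" using jm by simp
    have e: "e_coef m k (Suc j) * int (m - j) ^ ?K = e_coef m k j * (- int j) ^ ?K"
      using e_step[of j m k] j jm by simp
    have "real_of_int (e_coef m k (Suc j) * int (m - j) ^ ?K) = real_of_int (e_coef m k j * (- int j) ^ ?K)"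
      using e by (rule arg_cong)
    then have "x (Suc j) * (real (m - j)) ^ ?K = x j * (- real j) ^ ?K"
      unfolding x_def by simp
    then have "x (Suc j) * (real m - real j) ^ ?K = x j * (- real j) ^ ?K"
      using jm by (simp add: of_nat_diff)
    moreover have "x j \<noteq> 0" using nz j by simp
    moreover have bK: "(real m - real j)^?K \<noteq> 0" using mj0 by simp
    ultimately have xs: "x (Suc j) = x j * (-real j)^?K / (real m - real j)^?K"
      by (simp add: eq_divide_eq)
    have pw: "(-(real j/(real m - real j)))^?K = (-real j)^?K/(real m - real j)^?K"
      by (metis minus_divide_left power_divide)
    have "x (Suc j)/x j = (-(real j/(real m - real j)))^?K"
      unfolding pw xs using \<open>x j \<noteq> 0\<close> by simp
    moreover have "-(real j/(real m - real j)) \<le> (-(real j/(real m - real j)))^?K \<and> (-(real j/(real m - real j)))^?K \<le> 1"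
      using mj[of j] mj0 by (intro ratio_bounds) (auto simp: divide_le_eq_1)
    ultimately show "-(real j/(real m - real j)) \<le> x (Suc j)/x j \<and> x (Suc j)/x j \<le> 1" by simp
  qed
  have b: "-(real p) < oo/(2*x(p+1)) \<and> oo/(2*x(p+1)) < real m - real p"
  proof (cases "even m")
    case True then show ?thesis unfolding oo_def using p1 pm by simp
  next
    case False
    have "x (p+1) \<noteq> 0" using nz by simp
    then have "oo/(2*x(p+1)) = 1/2" unfolding oo_def using False by simp
    then show ?thesis using p1 pm by simp
  qed
  have K: "-(real 1 - 1) < (2*(\<Sum>t=1..p. x t) + oo)/(2*x 1)"
    using key[where i=1 and oo=oo, OF p1 pm nz rat] b p1 by simp
  have x1: "0 < x 1" unfolding x_def using e_one_pos[of m k] assms by simp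
  have "0 < 2*(\<Sum>t=1..p. x t) + oo"
    using K x1 by (simp add: zero_less_divide_iff)
  moreover have "real_of_int (d_coef m k) = 2*(\<Sum>t=1..p. x t) + oo"
    unfolding d_coef_def oo_def x_def p_def by simp
  ultimately show ?thesis by simp
qed

lemma d_dvd:
  assumes "m \<ge> 2"
  shows "int m dvd d_coef m k"
proof -
  define p where "p = m div 2"
  define C where "C = (\<Prod>l\<in>{1..m-1}. int l ^ k l)"
  have pm: "2*p \<le> m" unfolding p_def by simp
  have pm2: "m \<le> 2*p+1" unfolding p_def by simp
  have dv: "int m dvd e_coef m k j - C" if "1 \<le> j" "j \<le> m" for j
    using e_cong[OF that, of k] unfolding C_def by (simp add: mod_eq_dvd_iff)
  have s: "int m dvd (\<Sum>j=1..p. e_coef m k j - C)"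
    using pm by (intro dvd_sum dv) auto
  have sumeq: "(\<Sum>j=1..p. e_coef m k j) = (\<Sum>j=1..p. e_coef m k j - C) + int p * C"
    by (simp add: sum_subtractf)
  show ?thesis
  proof (cases "even m")
    case True
    then have "m = 2 * p" unfolding p_def by (metis dvd_mult_div_cancel)
    then have m: "int m = 2 * int p" by simp
    have "d_coef m k = 2*(\<Sum>j=1..p. e_coef m k j - C) + int m * C"
      unfolding d_coef_def using True p_def sumeq m by (simp add: algebra_simps)
    then show ?thesis using s by simp
  next
    case False
    then have m: "int m = 2 * int p + 1" unfolding p_def by presburger
    have "p + 1 \<le> m" using pm2 pm False unfolding p_def by presburger
    then have d1: "int m dvd e_coef m k (p+1) - C" by (intro dv) auto
    have "d_coef m k = (e_coef m k (p+1) - C) + 2*(\<Sum>j=1..p. e_coef m k j - C) + int m * C"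
      unfolding d_coef_def using False p_def sumeq m by (simp add: algebra_simps)
    then show ?thesis using s d1 by simp
  qed
qed

theorem mainTheorem15:
  fixes m :: nat and k :: "nat \<Rightarrow> nat"
  assumes "m \<ge> 2"
  shows "d_coef m k > 0 \<and> int m dvd d_coef m k"
  using d_pos[OF assms] d_dvd[OF assms] by simp

end
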